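(* Let $Y_1$ and $Y_2$ be bordered 3-manifolds with torus boundary (with bounded modules so the pairing theorem applies). Suppose $\widehat{CFD}(Y_1)$ has two durable generators $\mathbf x_1$ and $\mathbf y_1=D_{123}(\mathbf x_1)$, and $\widehat{CFD}(Y_2)$ has two weakly durable generators $\mathbf x_2$ and $\mathbf y_2=D_{123}(\mathbf x_2)$. Then the closed manifold $Y_1\cup Y_2$, whose Floer complex is $\widehat{CFA}(Y_1)\boxtimes\widehat{CFD}(Y_2)$, is not an $L$-space.
   Context: Notation as follows (over $\mathbb F=\mathbb Z/2$). Torus algebra $\mathcal A$: idempotents $\iota_0,\iota_1$ and Reeb elements $\rho_1=\iota_0\rho_1\iota_1$, $\rho_2=\iota_1\rho_2\iota_0$, $\rho_3=\iota_0\rho_3\iota_1$, $\rho_{12}=\iota_0\rho_{12}\iota_0$, $\rho_{23}=\iota_1\rho_{23}\iota_1$, $\rho_{123}=\iota_0\rho_{123}\iota_1$, nonzero products only $\rho_1\rho_2=\rho_{12},\rho_2\rho_3=\rho_{23},\rho_1\rho_{23}=\rho_{12}\rho_3=\rho_{123}$. For a type D structure $N$, coefficient maps $D_I$ are defined by $\delta_1(v)=\sum_I\rho_I\otimes D_I(v)$, $I\in\{\emptyset,1,2,3,12,23,123\}$; $\pi_{\mathbf x}$ is projection onto a basis generator $\mathbf x$. $\widehat{CFA}(Y_1)$ is the type A module obtained from $\widehat{CFD}(Y_1)$ by the standard algorithm, with generators in bijection. $Y$ is an $L$-space if it is a rational homology sphere with $\operatorname{rk}\widehat{HF}(Y)=|H_1(Y)|$;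 equivalently all of $\widehat{HF}(Y)$ lies in one relative $\mathbb Z/2$ grading. The relative $\mathbb Z/2$ gradings satisfy $gr(\rho_1)=gr(\rho_3)=0$, $gr(\rho_2)=gr(\rho_{12})=gr(\rho_{23})=gr(\rho_{123})=1$, the $\widehat{CFA}$ grading is obtained from the $\widehat{CFD}$ grading by flipping the grading of generators in idempotent $\iota_0$, and $gr(\mathbf x\otimes\mathbf y)=gr(\mathbf x)+gr(\mathbf y)$. Durable (type D): $\mathbf x\in\iota_0N$ is durable if $\pi_{\mathbf x}\circ D_I=0$ for all $I$, and whenever $D_{I_r}\circ\cdots\circ D_{I_1}(\mathbf x)\ne0$ (nonempty $I_j$): $I_1\in\{3,123\}$; if $I_1=123$, $r>1$ then $I_2=23$; if $I_1=3$, $r>1$ then $I_2\in\{23,2\}$; if $I_2=2$, $r>2$ then $I_3=123$. $\mathbf x\in\iota_1N$ is durable if whenever $\pi_{\mathbf x}\circ D_{I_r}\circ\cdots\circ D_{I_1}\ne0$ then $r=1$ and $I_1\in\{1,123\}$, and whenever $D_{I_r}\circ\cdots\circ D_{I_1}(\mathbf x)\ne0$ then $I_1=23$. Weakly durable (type D): $\mathbf x\in\iota_0N$ with $D_1(\mathbf x)=D_{12}(\mathbf x)=D_2D_{123}(\mathbf x)=D_1D_2D_3(\mathbf x)=D_{12}D_2D_3(\mathbf x)=0$; $\mathbf x\in\iota_1N$ with $D_2(\mathbf x)=0$, $\pi_{\mathbf x}\circ D_3=0$ and $\pi_{\mathbf x}\circ D_1D_2D_3=0$. *)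

theory Defs
  imports Main
begin

datatype idem = I0 | I1

text \<open>Nonempty Reeb elements; the empty index (idempotent) is encoded by None.\<close>
datatype chord = R1 | R2 | R3 | R12 | R23 | R123

fun chord_start :: "chord \<Rightarrow> idem" where
  "chord_start R1 = I0" | "chord_start R2 = I1" | "chord_start R3 = I0"
| "chord_start R12 = I0" | "chord_start R23 = I1" | "chord_start R123 = I0"

fun chord_end :: "chord \<Rightarrow> idem" where
  "chord_end R1 = I1" | "chord_end R2 = I0" | "chord_end R3 = I1"
| "chord_end R12 = I0" | "chord_end R23 = I1" | "chord_end R123 = I1"

text \<open>Relative Z/2 grading of algebra elements (True = odd); idempotents are even.\<close>
fun gr_alg :: "chord option \<Rightarrow> bool" where
  "gr_alg None = False"
| "gr_alg (Some R1) = False" | "gr_alg (Some R3) = False"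
| "gr_alg (Some R2) = True" | "gr_alg (Some R12) = True"
| "gr_alg (Some R23) = True" | "gr_alg (Some R123) = True"

fun chord_mult :: "chord \<Rightarrow> chord \<Rightarrow> chord option" where
  "chord_mult R1 R2 = Some R12"
| "chord_mult R2 R3 = Some R23"
| "chord_mult R1 R23 = Some R123"
| "chord_mult R12 R3 = Some R123"
| "chord_mult _ _ = None"

text \<open>\<open>alg_prod I J K\<close>: the product rho_I rho_J equals rho_K (None = idempotent).\<close>
fun alg_prod :: "chord option \<Rightarrow> chord option \<Rightarrow> chord option \<Rightarrow> bool" where
  "alg_prod None J K = (J = K)"
| "alg_prod (Some a) None K = (K = Some a)"
| "alg_prod (Some a) (Some b) K = (K \<noteq> None \<and> chord_mult a b = K)"

text \<open>A type D structure on the F_2-vector space with basis the (finite) type \<open>'g\<close>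
  is given by the idempotent of each generator and the matrices of the coefficient maps:
  \<open>D I x y\<close> is the coefficient of the generator \<open>y\<close> in \<open>D_I(x)\<close>, where \<open>I = None\<close> is the
  empty index. Thus \<open>delta_1(x) = sum_I rho_I \<otimes> D_I(x)\<close>.\<close>

type_synonym 'g coeff = "chord option \<Rightarrow> 'g \<Rightarrow> 'g \<Rightarrow> bool"

text \<open>Composite \<open>D_{I_r} \<circ> ... \<circ> D_{I_1}\<close> for the list \<open>[I_1,...,I_r]\<close> (matrix over F_2).\<close>
fun comp :: "'g coeff \<Rightarrow> chord list \<Rightarrow> 'g \<Rightarrow> 'g \<Rightarrow> bool" where
  "comp D [] x z = (x = z)"
| "comp D (I # Is) x z = odd (card {u. D (Some I) x u \<and> comp D Is u z})"

definition typeD :: "('g::finite \<Rightarrow> idem) \<Rightarrow> 'g coeff \<Rightarrow> bool" where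
  "typeD idm D \<longleftrightarrow>
     (\<forall>I x y. D (Some I) x y \<longrightarrow> idm x = chord_start I \<and> idm y = chord_end I)
   \<and> (\<forall>x y. D None x y \<longrightarrow> idm x = idm y)
   \<and> (\<forall>K x z. even (card {(I, J, w). alg_prod I J K \<and> D I x w \<and> D J w z}))"

text \<open>Grading convention: if \<open>rho_I \<otimes> y\<close> occurs in \<open>delta_1(x)\<close> then
  \<open>gr(x) = gr(rho_I) + gr(y) + 1\<close> (delta_1 has odd degree).\<close>
definition graded :: "'g coeff \<Rightarrow> ('g \<Rightarrow> bool) \<Rightarrow> bool" where
  "graded D gr \<longleftrightarrow> (\<forall>I x y. D I x y \<longrightarrow> gr y = (gr x \<noteq> (\<not> gr_alg I)))"

definition reduced :: "'g coeff \<Rightarrow> bool" where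
  "reduced D \<longleftrightarrow> (\<forall>x y. \<not> D None x y)"

definition boundedD :: "'g coeff \<Rightarrow> bool" where
  "boundedD D \<longleftrightarrow> (\<exists>L. \<forall>Is x z. length Is \<ge> L \<longrightarrow> \<not> comp D Is x z)"

definition durable :: "('g \<Rightarrow> idem) \<Rightarrow> 'g coeff \<Rightarrow> 'g \<Rightarrow> bool" where
  "durable idm D x \<longleftrightarrow>
    (if idm x = I0 then
       (\<forall>I w. \<not> D I w x)
     \<and> (\<forall>Is. (\<exists>z. comp D Is x z) \<and> Is \<noteq> [] \<longrightarrow>
           Is ! 0 \<in> {R3, R123}
         \<and> (Is ! 0 = R123 \<and> length Is > 1 \<longrightarrow> Is ! 1 = R23)
         \<and> (Is ! 0 = R3 \<and> length Is > 1 \<longrightarrow> Is ! 1 \<in> {R23, R2})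
         \<and> (Is ! 1 = R2 \<and> length Is > 2 \<longrightarrow> Is ! 2 = R123))
     else
       (\<forall>Is. (\<exists>w. comp D Is w x) \<and> Is \<noteq> [] \<longrightarrow> length Is = 1 \<and> Is ! 0 \<in> {R1, R123})
     \<and> (\<forall>Is. (\<exists>z. comp D Is x z) \<and> Is \<noteq> [] \<longrightarrow> Is ! 0 = R23))"

definition weakly_durable :: "('g \<Rightarrow> idem) \<Rightarrow> 'g coeff \<Rightarrow> 'g \<Rightarrow> bool" where
  "weakly_durable idm D x \<longleftrightarrow>
    (if idm x = I0 then
       (\<forall>z. \<not> comp D [R1] x z) \<and> (\<forall>z. \<not> comp D [R12] x z)
     \<and> (\<forall>z. \<not> comp D [R123, R2] x z)
     \<and> (\<forall>z. \<not> comp D [R3, R2, R1] x z)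
     \<and> (\<forall>z. \<not> comp D [R3, R2, R12] x z)
     else
       (\<forall>z. \<not> comp D [R2] x z)
     \<and> (\<forall>w. \<not> comp D [R3] w x)
     \<and> (\<forall>w. \<not> comp D [R3, R2, R1] w x))"

text \<open>Each coefficient map \<open>D_I\<close> contributes the word obtained from \<open>I\<close> by the relabelling
  1<->3 (so D_1, D_2, D_3, D_12, D_23, D_123 give the input sequences (rho_3), (rho_2), (rho_1),
  (rho_3,rho_2), (rho_2,rho_1), (rho_3,rho_2,rho_1)); along a chain of coefficient maps these
  sequences are concatenated, and at each junction the last chord and the next digit are
  merged into a single Reeb chord whenever they form one.\<close>

fun chord_word :: "chord \<Rightarrow> nat list" where
  "chord_word R1 = [3]" | "chord_word R2 = [2]" | "chord_word R3 = [1]"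
| "chord_word R12 = [3, 2]" | "chord_word R23 = [2, 1]" | "chord_word R123 = [3, 2, 1]"

fun digit_chord :: "nat \<Rightarrow> chord" where
  "digit_chord (Suc 0) = R1" | "digit_chord (Suc (Suc 0)) = R2" | "digit_chord _ = R3"

fun extend :: "chord \<Rightarrow> nat \<Rightarrow> chord option" where
  "extend R1 d = (if d = 2 then Some R12 else None)"
| "extend R12 d = (if d = 3 then Some R123 else None)"
| "extend R2 d = (if d = 3 then Some R23 else None)"
| "extend _ d = None"

fun attach :: "chord list \<Rightarrow> nat list \<Rightarrow> chord list" where
  "attach acc [] = acc"
| "attach [] ds = map digit_chord ds"
| "attach acc (d # ds) =
     (case extend (last acc) d of
        Some c \<Rightarrow> butlast acc @ [c] @ map digit_chord ds
      | None \<Rightarrow> acc @ map digit_chord (d # ds))"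

definition cfa_inputs :: "chord list \<Rightarrow> chord list" where
  "cfa_inputs Is = foldl (\<lambda>acc I. attach acc (chord_word I)) [] Is"

text \<open>\<open>mA D x as z\<close>: coefficient of \<open>z\<close> in \<open>m_{k+1}(x, rho_{a_1}, ..., rho_{a_k})\<close>, k >= 1,
  for the CFA obtained from the reduced type D structure with coefficient maps \<open>D\<close>
  (generators in bijection, same idempotents; m_1 = D_empty = 0 and m_2(x,1) = x).\<close>
definition mA :: "'g coeff \<Rightarrow> 'g \<Rightarrow> chord list \<Rightarrow> 'g \<Rightarrow> bool" where
  "mA D x as z \<longleftrightarrow> odd (card {Is. Is \<noteq> [] \<and> cfa_inputs Is = as \<and> comp D Is x z})"

definition grA :: "('g \<Rightarrow> idem) \<Rightarrow> ('g \<Rightarrow> bool) \<Rightarrow> 'g \<Rightarrow> bool" where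
  "grA idm gr x = (if idm x = I0 then \<not> gr x else gr x)"

definition tgen :: "('a \<Rightarrow> idem) \<Rightarrow> ('b \<Rightarrow> idem) \<Rightarrow> ('a \<times> 'b) set" where
  "tgen idm1 idm2 = {(x, y). idm1 x = idm2 y}"

text \<open>Coefficient of \<open>z \<otimes> w\<close> in \<open>\<partial>(x \<otimes> y) = sum_k m_{k+1}(x, a_1..a_k) \<otimes> D_{a_k}...D_{a_1}(y)\<close>.\<close>
definition tdiff :: "('a \<Rightarrow> idem) \<Rightarrow> 'a coeff \<Rightarrow> ('b \<Rightarrow> idem) \<Rightarrow> 'b coeff
                    \<Rightarrow> 'a \<times> 'b \<Rightarrow> 'a \<times> 'b \<Rightarrow> bool" where
  "tdiff idm1 D1 idm2 D2 p q \<longleftrightarrow>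
     p \<in> tgen idm1 idm2 \<and> q \<in> tgen idm1 idm2 \<and>
     odd (card {as. as \<noteq> [] \<and> mA D1 (fst p) as (fst q) \<and> comp D2 as (snd p) (snd q)})"

text \<open>Chains are finite sets of tensor generators (F_2-vectors).\<close>
definition tapply :: "('c \<Rightarrow> 'c \<Rightarrow> bool) \<Rightarrow> 'c set \<Rightarrow> 'c set" where
  "tapply M S = {q. odd (card {p \<in> S. M p q})}"

definition tgr :: "('a \<Rightarrow> idem) \<Rightarrow> ('a \<Rightarrow> bool) \<Rightarrow> ('b \<Rightarrow> bool) \<Rightarrow> 'a \<times> 'b \<Rightarrow> bool" where
  "tgr idm1 gr1 gr2 p = (grA idm1 gr1 (fst p) \<noteq> gr2 (snd p))"

text \<open>The homology of the box tensor product has nonzero classes in both Z/2 gradings,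
  i.e. it is not supported in a single relative Z/2 grading (so the glued manifold is
  not an L-space).\<close>
definition homology_in_both_gradings ::
  "('a::finite \<Rightarrow> idem) \<Rightarrow> 'a coeff \<Rightarrow> ('a \<Rightarrow> bool) \<Rightarrow>
   ('b::finite \<Rightarrow> idem) \<Rightarrow> 'b coeff \<Rightarrow> ('b \<Rightarrow> bool) \<Rightarrow> bool" where
  "homology_in_both_gradings idm1 D1 gr1 idm2 D2 gr2 \<longleftrightarrow>
    (\<exists>S0 S1. S0 \<subseteq> tgen idm1 idm2 \<and> S1 \<subseteq> tgen idm1 idm2
      \<and> tapply (tdiff idm1 D1 idm2 D2) S0 = {} \<and> tapply (tdiff idm1 D1 idm2 D2) S1 = {}
      \<and> (\<forall>T \<subseteq> tgen idm1 idm2. tapply (tdiff idm1 D1 idm2 D2) T \<noteq> S0)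
      \<and> (\<forall>T \<subseteq> tgen idm1 idm2. tapply (tdiff idm1 D1 idm2 D2) T \<noteq> S1)
      \<and> (\<forall>p\<in>S0. tgr idm1 gr1 gr2 p = False)
      \<and> (\<forall>p\<in>S1. tgr idm1 gr1 gr2 p = True))"

end

theory Submission
  imports Defs
begin

lemma comp_single: "comp D [I] x z = D (Some I) x z"
proof -
  have "{u. D (Some I) x u \<and> u = z} = (if D (Some I) x z then {z} else {})" by auto
  then show ?thesis by simp
qed

lemma comp_Cons_ex: "comp D (I#Is) x z \<Longrightarrow> \<exists>u. D (Some I) x u \<and> comp D Is u z"
proof (rule ccontr)
  assume a: "comp D (I#Is) x z" "\<not> (\<exists>u. D (Some I) x u \<and> comp D Is u z)"
  then have "{u. D (Some I) x u \<and> comp D Is u z} = {}" by auto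
  with a show False by simp
qed

lemma odd_sum_card: "finite A \<Longrightarrow> odd (sum f A) = odd (card {a\<in>A. odd ((f a)::nat)})"
proof (induction A rule: finite_induct)
  case empty then show ?case by simp
next
  case (insert x F)
  have "{a\<in>insert x F. odd (f a)} = (if odd (f x) then insert x {a\<in>F. odd (f a)} else {a\<in>F. odd (f a)})"
    by auto
  with insert show ?case by auto
qed

lemma odd_card_Sigma:
  fixes P :: "'u::finite \<Rightarrow> bool" and Q :: "'u \<Rightarrow> 'w::finite \<Rightarrow> bool"
  shows "odd (card {(u,w). P u \<and> Q u w}) = odd (card {u. P u \<and> odd (card {w. Q u w})})"
proof -
  have "{(u,w). P u \<and> Q u w} = Sigma {u. P u} (\<lambda>u. {w. Q u w})" by auto
  then have "card {(u,w). P u \<and> Q u w} = (\<Sum>u\<in>{u. P u}. card {w. Q u w})"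
    by (simp add: card_SigmaI)
  moreover have "odd (\<Sum>u\<in>{u. P u}. card {w. Q u w}) = odd (card {u\<in>{u. P u}. odd (card {w. Q u w})})"
    by (rule odd_sum_card) simp
  ultimately show ?thesis by simp
qed

lemma comp_append:
  fixes D :: "'g::finite coeff"
  shows "comp D (l1 @ l2) x z = odd (card {w. comp D l1 x w \<and> comp D l2 w z})"
proof (induction l1 arbitrary: x)
  case Nil
  have "{w. x = w \<and> comp D l2 w z} = (if comp D l2 x z then {x} else {})" by auto
  then show ?case by simp
next
  case (Cons I l1)
  have "comp D ((I # l1) @ l2) x z = odd (card {u. D (Some I) x u \<and> odd (card {w. comp D l1 u w \<and> comp D l2 w z})})"
    using Cons by simp
  also have "\<dots> = odd (card {(u,w). D (Some I) x u \<and> (comp D l1 u w \<and> comp D l2 w z)})"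
    by (rule odd_card_Sigma[symmetric])
  also have "card {(u,w). D (Some I) x u \<and> (comp D l1 u w \<and> comp D l2 w z)}
     = card {(w,u). comp D l2 w z \<and> (D (Some I) x u \<and> comp D l1 u w)}"
  proof -
    have "{(w,u). comp D l2 w z \<and> (D (Some I) x u \<and> comp D l1 u w)} = prod.swap ` {(u,w). D (Some I) x u \<and> (comp D l1 u w \<and> comp D l2 w z)}"
      by auto
    then show ?thesis by (simp add: card_image)
  qed
  also have "odd \<dots> = odd (card {w. comp D l2 w z \<and> odd (card {u. D (Some I) x u \<and> comp D l1 u w})})"
    by (rule odd_card_Sigma)
  also have "\<dots> = odd (card {w. comp D (I # l1) x w \<and> comp D l2 w z})"
    by (simp add: conj_commute)
  finally show ?case .
qed

definition "ff = (\<lambda>acc I. attach acc (chord_word I))"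

lemma attach_prefix: "acc \<noteq> [] \<Longrightarrow> \<exists>r. r \<noteq> [] \<and> attach acc ds = butlast acc @ r"
proof (cases ds)
  case Nil
  assume "acc \<noteq> []" then show ?thesis using Nil
    by (intro exI[of _ "[last acc]"]) simp
next
  case (Cons d ds')
  assume a: "acc \<noteq> []"
  then obtain a1 as1 where acc: "acc = a1 # as1" by (cases acc) auto
  show ?thesis
  proof (cases "extend (last acc) d")
    case None then show ?thesis using a Cons acc
      by (intro exI[of _ "[last acc] @ map digit_chord (d # ds')"]) (simp add: append_butlast_last_id)
  next
    case (Some c) then show ?thesis using a Cons acc
      by (intro exI[of _ "[c] @ map digit_chord ds'"]) simp
  qed
qed

lemma foldl_prefix: "acc \<noteq> [] \<Longrightarrow> \<exists>r. r \<noteq> [] \<and> foldl ff acc Js = butlast acc @ r"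
proof (induction Js arbitrary: acc)
  case Nil then show ?case by (intro exI[of _ "[last acc]"]) simp
next
  case (Cons J Js)
  obtain r where r: "r \<noteq> []" "ff acc J = butlast acc @ r"
    using attach_prefix[OF Cons.prems] unfolding ff_def by blast
  then have "ff acc J \<noteq> []" by simp
  then obtain r' where r': "r' \<noteq> []" "foldl ff (ff acc J) Js = butlast (ff acc J) @ r'"
    using Cons.IH by blast
  have "butlast (ff acc J) = butlast acc @ butlast r" using r by (simp add: butlast_append)
  then show ?case using r r' by (intro exI[of _ "butlast r @ r'"]) simp
qed

lemma cfa_Cons: "cfa_inputs (I # Js) = foldl ff (ff [] I) Js"
  unfolding cfa_inputs_def ff_def by simp


declare comp.simps[simp del]

lemma mA_ex: "mA D x as z \<Longrightarrow> \<exists>Is. Is \<noteq> [] \<and> cfa_inputs Is = as \<and> comp D Is x z"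
proof (rule ccontr)
  assume a: "mA D x as z" "\<not> (\<exists>Is. Is \<noteq> [] \<and> cfa_inputs Is = as \<and> comp D Is x z)"
  then have "{Is. Is \<noteq> [] \<and> cfa_inputs Is = as \<and> comp D Is x z} = {}" by auto
  with a show False unfolding mA_def by simp
qed

lemma comp_nohit: "\<forall>I w. \<not> D I w x \<Longrightarrow> Is \<noteq> [] \<Longrightarrow> \<not> comp D Is w x"
proof (induction Is arbitrary: w)
  case Nil then show ?case by blast
next
  case outer: (Cons I Is)
  show ?case
  proof (cases Is)
    case Nil
    have "\<not> D (Some I) w x" using outer.prems(1) by blast
    then show ?thesis unfolding Nil comp_single .
  next
    case (Cons J Js)
    show ?thesis
    proof
      assume "comp D (I # Is) w x"
      then obtain u where u: "comp D Is u x" using comp_Cons_ex by metis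
      have "Is \<noteq> []" using Cons by simp
      then show False using u outer.IH outer.prems(1) by blast
    qed
  qed
qed

lemma pref_start: "acc \<noteq> [] \<Longrightarrow> foldl ff acc Js = as \<Longrightarrow> \<exists>r. as = butlast acc @ r"
  using foldl_prefix by blast

lemma x_cycle:
  fixes D1 :: "'a::finite coeff" and D2 :: "'b::finite coeff"
  assumes x1: "durable idm1 D1 x1" "idm1 x1 = I0"
    and x2: "weakly_durable idm2 D2 x2" "idm2 x2 = I0"
    and y2: "weakly_durable idm2 D2 y2" "idm2 y2 = I1"
    and y2_def: "\<forall>z. D2 (Some R123) x2 z \<longleftrightarrow> z = y2"
    and m: "mA D1 x1 as z"
  shows "\<not> comp D2 as x2 w"
proof
  assume c: "comp D2 as x2 w"
  obtain Is where Is: "Is \<noteq> []" "cfa_inputs Is = as" "comp D1 Is x1 z" using mA_ex[OF m] by blast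
  have dur: "Is ! 0 \<in> {R3, R123}
         \<and> (Is ! 0 = R123 \<and> length Is > 1 \<longrightarrow> Is ! 1 = R23)
         \<and> (Is ! 0 = R3 \<and> length Is > 1 \<longrightarrow> Is ! 1 \<in> {R23, R2})
         \<and> (Is ! 1 = R2 \<and> length Is > 2 \<longrightarrow> Is ! 2 = R123)"
  proof -
    have "\<forall>Is. (\<exists>z. comp D1 Is x1 z) \<and> Is \<noteq> [] \<longrightarrow>
           Is ! 0 \<in> {R3, R123}
         \<and> (Is ! 0 = R123 \<and> length Is > 1 \<longrightarrow> Is ! 1 = R23)
         \<and> (Is ! 0 = R3 \<and> length Is > 1 \<longrightarrow> Is ! 1 \<in> {R23, R2})
         \<and> (Is ! 1 = R2 \<and> length Is > 2 \<longrightarrow> Is ! 2 = R123)"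
      using x1(1) unfolding durable_def x1(2) if_P[OF refl] by blast
    then show ?thesis using Is by blast
  qed
  have w1: "\<And>z. \<not> D2 (Some R1) x2 z" using x2 unfolding weakly_durable_def by (simp add: comp_single)
  have w12: "\<And>z. \<not> D2 (Some R12) x2 z" using x2 unfolding weakly_durable_def by (simp add: comp_single)
  have w321: "\<And>z. \<not> comp D2 [R3,R2,R1] x2 z" using x2 unfolding weakly_durable_def by simp
  have w3212: "\<And>z. \<not> comp D2 [R3,R2,R12] x2 z" using x2 unfolding weakly_durable_def by simp
  have wy2: "\<And>z. \<not> D2 (Some R2) y2 z" using y2 unfolding weakly_durable_def by (simp add: comp_single)
  have no1: "\<And>r. \<not> comp D2 (R1 # r) x2 w" using w1 comp_Cons_ex[of D2 R1 _ x2 w] by blast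
  have no12: "\<And>r. \<not> comp D2 (R12 # r) x2 w" using w12 comp_Cons_ex[of D2 R12 _ x2 w] by blast
  have no1232: "\<not> comp D2 (R123 # R2 # r) x2 w" for r
  proof
    assume "comp D2 (R123 # R2 # r) x2 w"
    then obtain u where "D2 (Some R123) x2 u" "comp D2 (R2 # r) u w" using comp_Cons_ex[of D2 R123 "R2 # r" x2 w] by blast
    then have "comp D2 (R2 # r) y2 w" using y2_def by simp
    then show False using comp_Cons_ex[of D2 R2 r y2 w] wy2 by blast
  qed
  have no3212: "\<And>r. \<not> comp D2 ([R3,R2,R12] @ r) x2 w"
    using w3212 by (simp only: comp_append) simp
  obtain I Js where IJ: "Is = I # Js" using Is(1) by (cases Is) auto
  have as: "as = foldl ff (ff [] I) Js" using Is(2) IJ cfa_Cons by simp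
  from dur IJ have "I = R3 \<or> I = R123" by simp
  then show False
  proof
    assume I: "I = R3"
    have f0: "ff [] R3 = [R1]" by (simp add: ff_def eval_nat_numeral)
    show False
    proof (cases Js)
      case Nil then show False using as I f0 c w1 by (simp add: comp_single)
    next
      case (Cons J Ks)
      from dur IJ I Cons have "J = R23 \<or> J = R2" by simp
      then show False
      proof
        assume J: "J = R23"
        have "ff [R1] R23 = [R12, R1]" by (simp add: ff_def eval_nat_numeral)
        then have "as = foldl ff [R12, R1] Ks" using as I Cons J f0 by simp
        then obtain r where "as = R12 # r" using pref_start[of "[R12,R1]"] by auto
        then show False using c no12 by simp
      next
        assume J: "J = R2"
        have f1: "ff [R1] R2 = [R12]" by (simp add: ff_def eval_nat_numeral)
        show False
        proof (cases Ks)
          case Nil then show False using as I Cons J f0 f1 c no12 by simp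
        next
          case (Cons K Ls)
          from dur IJ I J \<open>Js = J # Ks\<close> Cons have K: "K = R123" by simp
          have "ff [R12] R123 = [R123, R2, R1]" by (simp add: ff_def eval_nat_numeral)
          then have "as = foldl ff [R123, R2, R1] Ls" using as I \<open>Js = J # Ks\<close> J Cons K f0 f1 by simp
          then obtain r where "as = R123 # R2 # r" using pref_start[of "[R123,R2,R1]"] by auto
          then show False using c no1232 by simp
        qed
      qed
    qed
  next
    assume I: "I = R123"
    have f0: "ff [] R123 = [R3,R2,R1]" by (simp add: ff_def eval_nat_numeral)
    show False
    proof (cases Js)
      case Nil then show False using as I f0 c w321 by simp
    next
      case (Cons J Ks)
      from dur IJ I Cons have J: "J = R23" by simp
      have "ff [R3,R2,R1] R23 = [R3,R2,R12,R1]" by (simp add: ff_def eval_nat_numeral)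
      then have "as = foldl ff [R3,R2,R12,R1] Ks" using as I Cons J f0 by simp
      then obtain r where "as = [R3,R2,R12] @ r" using pref_start[of "[R3,R2,R12,R1]"] by auto
      then show False using c no3212 by simp
    qed
  qed
qed


lemma y_cycle:
  fixes D1 :: "'a::finite coeff" and D2 :: "'b::finite coeff"
  assumes y1: "durable idm1 D1 y1" "idm1 y1 = I1"
    and y2: "weakly_durable idm2 D2 y2" "idm2 y2 = I1"
    and m: "mA D1 y1 as z"
  shows "\<not> comp D2 as y2 w"
proof
  assume c: "comp D2 as y2 w"
  obtain Is where Is: "Is \<noteq> []" "cfa_inputs Is = as" "comp D1 Is y1 z" using mA_ex[OF m] by blast
  have dur: "Is ! 0 = R23" using y1 Is unfolding durable_def by auto
  have wy2: "\<And>z. \<not> D2 (Some R2) y2 z" using y2 unfolding weakly_durable_def by (simp add: comp_single)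
  have no2: "\<And>r. \<not> comp D2 (R2 # r) y2 w" using wy2 comp_Cons_ex[of D2 R2 _ y2 w] by blast
  obtain I Js where IJ: "Is = I # Js" using Is(1) by (cases Is) auto
  have as: "as = foldl ff (ff [] I) Js" using Is(2) IJ cfa_Cons by simp
  have "ff [] R23 = [R2, R1]" by (simp add: ff_def eval_nat_numeral)
  then have "as = foldl ff [R2, R1] Js" using as dur IJ by simp
  then obtain r where "as = R2 # r" using pref_start[of "[R2,R1]"] by auto
  then show False using c no2 by simp
qed

lemma y_nohit:
  fixes D1 :: "'a::finite coeff" and D2 :: "'b::finite coeff"
  assumes y1: "durable idm1 D1 y1" "idm1 y1 = I1"
    and y2: "weakly_durable idm2 D2 y2" "idm2 y2 = I1"
    and m: "mA D1 v as y1"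
  shows "\<not> comp D2 as u y2"
proof
  assume c: "comp D2 as u y2"
  obtain Is where Is: "Is \<noteq> []" "cfa_inputs Is = as" "comp D1 Is v y1" using mA_ex[OF m] by blast
  have dur: "length Is = 1 \<and> Is ! 0 \<in> {R1, R123}" using y1 Is unfolding durable_def by auto
  have w3: "\<And>w. \<not> comp D2 [R3] w y2" using y2 unfolding weakly_durable_def by simp
  have w321: "\<And>w. \<not> comp D2 [R3,R2,R1] w y2" using y2 unfolding weakly_durable_def by simp
  obtain I where IJ: "Is = [I]" using dur by (cases Is) auto
  have as: "as = ff [] I" using Is(2) IJ cfa_Cons by simp
  have "I = R1 \<or> I = R123" using dur IJ by simp
  then show False
  proof
    assume "I = R1"
    then have "as = [R3]" using as by (simp add: ff_def eval_nat_numeral)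
    then show False using c w3 by simp
  next
    assume "I = R123"
    then have "as = [R3,R2,R1]" using as by (simp add: ff_def eval_nat_numeral)
    then show False using c w321 by simp
  qed
qed

lemma tapply_single: "tapply M {p} = {q. M p q}"
proof -
  have "\<And>q. {p' \<in> {p}. M p' q} = (if M p q then {p} else {})" by auto
  then show ?thesis unfolding tapply_def by auto
qed

lemma notin_tapply: "(\<And>p. \<not> M p q) \<Longrightarrow> q \<notin> tapply M T"
  unfolding tapply_def by simp

theorem proposition3p3:
  fixes idm1 :: "'a::finite \<Rightarrow> idem" and D1 :: "'a coeff" and gr1 :: "'a \<Rightarrow> bool"
    and idm2 :: "'b::finite \<Rightarrow> idem" and D2 :: "'b coeff" and gr2 :: "'b \<Rightarrow> bool"
    and x1 y1 :: 'a and x2 y2 :: 'b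
  assumes N1: "typeD idm1 D1" "graded D1 gr1" "reduced D1"
    and N2: "typeD idm2 D2" "graded D2 gr2" "reduced D2"
    and bdd: "boundedD D1 \<or> boundedD D2"
    and x1: "durable idm1 D1 x1" and y1: "durable idm1 D1 y1"
    and y1_def: "\<forall>z. D1 (Some R123) x1 z \<longleftrightarrow> z = y1"
    and x2: "weakly_durable idm2 D2 x2" and y2: "weakly_durable idm2 D2 y2"
    and y2_def: "\<forall>z. D2 (Some R123) x2 z \<longleftrightarrow> z = y2"
  shows "homology_in_both_gradings idm1 D1 gr1 idm2 D2 gr2"
proof -
  have d1: "D1 (Some R123) x1 y1" using y1_def by simp
  have d2: "D2 (Some R123) x2 y2" using y2_def by simp
  have t1: "\<forall>I x y. D1 (Some I) x y \<longrightarrow> idm1 x = chord_start I \<and> idm1 y = chord_end I"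
    using N1(1) unfolding typeD_def by (rule conjunct1)
  have t2: "\<forall>I x y. D2 (Some I) x y \<longrightarrow> idm2 x = chord_start I \<and> idm2 y = chord_end I"
    using N2(1) unfolding typeD_def by (rule conjunct1)
  have i1: "idm1 x1 = I0" "idm1 y1 = I1" using t1[rule_format, OF d1] by simp_all
  have i2: "idm2 x2 = I0" "idm2 y2 = I1" using t2[rule_format, OF d2] by simp_all
  have g1: "gr1 y1 = gr1 x1" using N1(2)[unfolded graded_def, rule_format, OF d1] by simp
  have g2: "gr2 y2 = gr2 x2" using N2(2)[unfolded graded_def, rule_format, OF d2] by simp
  let ?M = "tdiff idm1 D1 idm2 D2"
  let ?T = "tgen idm1 idm2"
  have X: "(x1, x2) \<in> ?T" "(y1, y2) \<in> ?T" using i1 i2 unfolding tgen_def by auto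
  have cx: "\<not> ?M (x1, x2) q" for q
  proof -
    have e: "{as. as \<noteq> [] \<and> mA D1 x1 as (fst q) \<and> comp D2 as x2 (snd q)} = {}"
      using x_cycle[OF x1 i1(1) x2 i2(1) y2 i2(2) y2_def] by blast
    show ?thesis unfolding tdiff_def fst_conv snd_conv e by simp
  qed
  have cy: "\<not> ?M (y1, y2) q" for q
  proof -
    have e: "{as. as \<noteq> [] \<and> mA D1 y1 as (fst q) \<and> comp D2 as y2 (snd q)} = {}"
      using y_cycle[OF y1 i1(2) y2 i2(2)] by blast
    show ?thesis unfolding tdiff_def fst_conv snd_conv e by simp
  qed
  have hx: "\<not> ?M p (x1, x2)" for p
  proof -
    have nh: "\<forall>I w. \<not> D1 I w x1" using x1 i1 unfolding durable_def by simp
    have e: "{as. as \<noteq> [] \<and> mA D1 (fst p) as x1 \<and> comp D2 as (snd p) x2} = {}"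
    proof -
      have "\<not> (as \<noteq> [] \<and> mA D1 (fst p) as x1)" for as
      proof
        assume "as \<noteq> [] \<and> mA D1 (fst p) as x1"
        then obtain Is where "Is \<noteq> []" "comp D1 Is (fst p) x1" using mA_ex[of D1 "fst p" as x1] by blast
        then show False using comp_nohit[of D1 x1, OF nh] by blast
      qed
      then show ?thesis by blast
    qed
    show ?thesis unfolding tdiff_def fst_conv snd_conv e by simp
  qed
  have hy: "\<not> ?M p (y1, y2)" for p
  proof -
    have e: "{as. as \<noteq> [] \<and> mA D1 (fst p) as y1 \<and> comp D2 as (snd p) y2} = {}"
      using y_nohit[OF y1 i1(2) y2 i2(2)] by blast
    show ?thesis unfolding tdiff_def fst_conv snd_conv e by simp
  qed
  have zx: "tapply ?M {(x1,x2)} = {}" using cx by (simp add: tapply_single)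
  have zy: "tapply ?M {(y1,y2)} = {}" using cy by (simp add: tapply_single)
  have bx: "\<forall>T \<subseteq> ?T. tapply ?M T \<noteq> {(x1,x2)}" using notin_tapply[of ?M, OF hx] by blast
  have by': "\<forall>T \<subseteq> ?T. tapply ?M T \<noteq> {(y1,y2)}" using notin_tapply[of ?M, OF hy] by blast
  have gx: "tgr idm1 gr1 gr2 (x1,x2) = (\<not> gr1 x1 \<noteq> gr2 x2)" unfolding tgr_def grA_def using i1 by simp
  have gy: "tgr idm1 gr1 gr2 (y1,y2) = (gr1 x1 \<noteq> gr2 x2)" unfolding tgr_def grA_def using i1 g1 g2 by simp
  show ?thesis
  proof (cases "tgr idm1 gr1 gr2 (x1,x2)")
    case True
    then show ?thesis unfolding homology_in_both_gradings_def
      using X zx zy bx by' gx gy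
      by (intro exI[of _ "{(y1,y2)}"] exI[of _ "{(x1,x2)}"]) auto
  next
    case False
    then show ?thesis unfolding homology_in_both_gradings_def
      using X zx zy bx by' gx gy
      by (intro exI[of _ "{(x1,x2)}"] exI[of _ "{(y1,y2)}"]) auto
  qed
qed

end
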